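(* Let $n\geq1$ be an integer and let $\lambda,\lambda_1\in\mathbb{C}$ with $0<|\lambda_1|<|\lambda|<1$. Let $Q\in\mathcal{H}[1,n]$ satisfy $Q(z)\prec 1+\lambda_1 z$ $(z\in\mathbb{U})$. (1) Assume $|\lambda|^2+|\lambda_1|^2\leq 1$, and define $$\alpha_0=\begin{cases}\dfrac{1-|\lambda|}{1+|\lambda_1|}, & \text{if } 0<|\lambda|+|\lambda_1|\leq 1,\\[2mm] \dfrac{1-(|\lambda|^2+|\lambda_1|^2)}{2(1-|\lambda_1|^2)}, & \text{if } |\lambda|^2+|\lambda_1|^2\leq 1\leq |\lambda|+|\lambda_1|.\end{cases}$$ If $p\in\mathcal{H}[1,n]$ and $\alpha$ is a real number with $\alpha\leq\alpha_0$ such that $$Q(z)\,[\alpha+(1-\alpha)p(z)]\prec 1+\lambda z\qquad(z\in\mathbb{U}),$$ then $\operatorname{Re}(p(z))>0$ for all $z\in\mathbb{U}$. (2) Assume $|\lambda|+2|\lambda_1|\leq 1$. If $w\in\mathcal{H}[0,n]$ and $$Q(z)\,[1+w(z)]\prec 1+\lambda z\qquad (z\in\mathbb{U}),$$ then $$|w(z)|<\frac{|\lambda|+|\lambda_1|}{1-|\lambda_1|}\leq 1\qquad(z\in\mathbb{U}).$$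
   Context: $\mathbb{U}=\{z\in\mathbb{C}:|z|<1\}$. For $a_0\in\mathbb{C}$ and an integer $n\geq1$, $\mathcal{H}[a_0,n]$ denotes the class of functions analytic in $\mathbb{U}$ of the form $p(z)=a_0+\sum_{k=n}^\infty a_k z^k$. For $f,g$ analytic in $\mathbb{U}$, $f\prec g$ ($f$ is subordinate to $g$) means there is an analytic $w$ in $\mathbb{U}$ with $w(0)=0$, $|w(z)|<1$ on $\mathbb{U}$, and $f(z)=g(w(z))$; for $\lambda\neq0$, $q\prec 1+\lambda z$ means $q(0)=1$ and $|q(z)-1|<|\lambda|$ on $\mathbb{U}$. *)

theory Defs
  imports "HOL-Analysis.Analysis"
begin

definition H_class :: "complex \<Rightarrow> nat \<Rightarrow> (complex \<Rightarrow> complex) set" where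
  "H_class a0 n = {p. p holomorphic_on ball 0 1 \<and> p 0 = a0 \<and>
      (\<forall>k. 1 \<le> k \<and> k < n \<longrightarrow> (deriv ^^ k) p 0 = 0)}"

definition subordinate :: "(complex \<Rightarrow> complex) \<Rightarrow> (complex \<Rightarrow> complex) \<Rightarrow> bool" where
  "subordinate f g \<longleftrightarrow> (\<exists>w. w holomorphic_on ball 0 1 \<and> w 0 = 0 \<and>
      (\<forall>z\<in>ball 0 1. norm (w z) < 1) \<and> (\<forall>z\<in>ball 0 1. f z = g (w z)))"

definition alpha0 :: "real \<Rightarrow> real \<Rightarrow> real" where
  "alpha0 a b = (if a + b \<le> 1 then (1 - a) / (1 + b)
                 else (1 - (a^2 + b^2)) / (2 * (1 - b^2)))"

end

theory Submission
  imports Defs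
begin

lemma quad_bound:
  fixes a b x r :: real
  assumes a: "0 < a" "a < 1" and b: "0 < b" "b < 1"
    and x: "2 * x \<ge> r^2 + 1 - b^2" and r: "1 - b \<le> r" "r \<le> 1 + b"
  shows "x - a * r \<ge> alpha0 a b * r^2"
proof (cases "a + b \<le> 1")
  case True
  have f1: "0 \<le> 1 + b - r" using r by simp
  have f2: "0 \<le> (1 - b^2) - (2*a+b-1) * r"
  proof (cases "2*a+b-1 \<ge> 0")
    case True
    have "(2*a+b-1) * r \<le> (2*a+b-1) * (1+b)" using r True by (simp add: mult_left_mono)
    also have "\<dots> \<le> 1 - b^2" proof -
      have "b*(a+b) \<le> b*1" using \<open>a+b\<le>1\<close> b by (intro mult_left_mono) auto
      thus ?thesis using \<open>a+b\<le>1\<close> by (simp add: power2_eq_square algebra_simps)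
    qed
    finally show ?thesis by simp
  next
    case False
    have "(2*a+b-1) * r \<le> (2*a+b-1) * (1-b)" using r False by (simp add: mult_left_mono_neg)
    also have "\<dots> \<le> (1+b) * (1-b)" using b a by (intro mult_right_mono) auto
    also have "\<dots> = 1 - b^2" by (simp add: power2_eq_square algebra_simps)
    finally show ?thesis by simp
  qed
  have prod: "0 \<le> (1 + b - r) * ((1 - b^2) - (2*a+b-1) * r)" using f1 f2 by simp
  have key: "(1+b) * (r^2+1-b^2) - 2*a*(1+b)*r - 2*(1-a)*r^2 = (1 + b - r) * ((1 - b^2) - (2*a+b-1) * r)"
    by (simp add: power2_eq_square algebra_simps)
  have "(1+b)*(2*x) - 2*a*(1+b)*r - 2*(1-a)*r^2 \<ge> 0"
    using prod key x b mult_left_mono[OF x, of "1+b"] by linarith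
  hence "(1-a) * r^2 \<le> (1+b) * (x - a*r)" by (simp add: algebra_simps)
  hence "(1-a)/(1+b) * r^2 \<le> x - a*r" using b by (simp add: field_simps)
  thus ?thesis using True by (simp add: alpha0_def)
next
  case False
  have d: "0 < 1 - b^2" using b by (simp add: power2_eq_square) (metis less_trans mult_strict_right_mono mult_1 mult_less_cancel_right1 mult.commute)
  have key: "2*(1-b^2)*((r^2+1-b^2)/2 - a*r) - (1 - (a^2+b^2)) * r^2 = (a*r - (1-b^2))^2"
    by (simp add: power2_eq_square field_simps)
  have "0 \<le> 2*(1-b^2)*((r^2+1-b^2)/2 - a*r) - (1 - (a^2+b^2)) * r^2"
    unfolding key by simp
  moreover have "2*(1-b^2)*((r^2+1-b^2)/2 - a*r) \<le> 2*(1-b^2)*(x - a*r)"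
    using d x by (intro mult_left_mono) auto
  ultimately have "(1 - (a^2+b^2)) * r^2 \<le> (2*(1-b^2)) * (x - a*r)" by linarith
  hence "(1 - (a^2+b^2)) / (2*(1-b^2)) * r^2 \<le> x - a*r" using d by (simp add: field_simps)
  thus ?thesis using False by (simp add: alpha0_def)
qed

lemma core1:
  fixes u v :: complex and a b :: real
  assumes a: "0 < a" "a < 1" and b: "0 < b" "b < 1"
    and u: "norm u < a" and v: "norm v < b"
  shows "Re ((1+u)/(1+v)) > alpha0 a b"
proof -
  define w where "w = 1 + v"
  define r where "r = norm w"
  have r1: "r \<ge> 1 - b" unfolding r_def w_def using v norm_triangle_ineq2[of 1 "-v"] by simp
  have r2: "r \<le> 1 + b" unfolding r_def w_def using v norm_triangle_ineq[of 1 v] by simp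
  have rpos: "r > 0" using r1 b by simp
  have wv: "w - 1 = v" by (simp add: w_def)
  have "(norm (w-1))^2 = r^2 - 2 * Re w + 1" unfolding r_def cmod_power2
    by (simp add: power2_eq_square algebra_simps)
  moreover have "(norm (w-1))^2 \<le> b^2" unfolding wv using v norm_ge_zero power_mono by (smt (verit))
  ultimately have x: "2 * Re w \<ge> r^2 + 1 - b^2" by simp
  have q: "Re w - a*r \<ge> alpha0 a b * r^2" by (rule quad_bound[OF a b x r1 r2])
  have "Re (u * cnj w) \<ge> - norm (u * cnj w)" using abs_Re_le_cmod[of "u * cnj w"] by linarith
  moreover have "norm (u * cnj w) = norm u * r" by (simp add: r_def norm_mult)
  moreover have "norm u * r < a * r" using u rpos by simp
  ultimately have "Re (u * cnj w) > - a * r" by linarith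
  hence num: "Re ((1+u) * cnj w) > alpha0 a b * r^2" using q by (simp add: algebra_simps)
  have "Re ((1+u)/w) = Re ((1+u) * cnj w) / r^2"
    by (subst complex_div_cnj) (simp add: r_def Re_divide_of_real)
  also have "\<dots> > alpha0 a b" using num rpos by (simp add: field_simps)
  finally show ?thesis by (simp add: w_def)
qed

lemma core2:
  fixes u v :: complex and a b :: real
  assumes b: "0 < b" "b < 1"
    and u: "norm u < a" and v: "norm v < b"
  shows "norm ((1+u)/(1+v) - 1) < (a+b)/(1-b)"
proof -
  have n: "norm (1+v) \<ge> 1 - norm v" using norm_triangle_ineq2[of 1 "-v"] by simp
  have nz: "1 + v \<noteq> 0" using n v b by auto
  have "(1+u)/(1+v) - 1 = (u - v)/(1+v)" using nz by (simp add: field_simps)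
  hence "norm ((1+u)/(1+v) - 1) = norm (u-v) / norm (1+v)" by (simp add: norm_divide)
  also have "\<dots> \<le> norm (u-v) / (1 - b)" 
  proof (rule divide_left_mono)
    show "1 - b \<le> norm (1+v)" using n v by linarith
    show "0 \<le> norm (u-v)" by simp
    show "0 < norm (1+v) * (1 - b)" using n v b by (intro mult_pos_pos) linarith+
  qed
  also have "\<dots> < (a+b)/(1-b)" using norm_triangle_ineq4[of u v] u v b
    by (intro divide_strict_right_mono) auto
  finally show ?thesis .
qed

lemma alpha0_lt1:
  fixes a b :: real assumes "0 < a" "a < 1" "0 < b" "b < 1"
  shows "alpha0 a b < 1"
proof -
  have bb: "b^2 < 1" using assms by (simp add: power2_eq_square) (metis less_trans mult_strict_right_mono mult_1 mult_less_cancel_right1 mult.commute)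
  have aa: "0 < a^2" using assms by simp
  show ?thesis
  proof (cases "a + b \<le> 1")
    case True thus ?thesis using assms by (simp add: alpha0_def)
  next
    case False
    have g: "1 - (A+B) < 2*(1-B)" if "B < 1" "0 < A" for A B :: real
      using that by (simp add: algebra_simps)
    have "1 - (a^2+b^2) < 2*(1-b^2)" using g[OF bb aa] .
    thus ?thesis using False bb by (simp add: alpha0_def)
  qed
qed

lemma sub_get2:
  assumes "subordinate f (\<lambda>z. 1 + c * z)" "z \<in> ball 0 1" "c \<noteq> 0"
  obtains v where "f z = 1 + v" "norm v < norm c"
proof -
  from assms(1) obtain w where w: "\<forall>z\<in>ball 0 1. norm (w z) < 1" "\<forall>z\<in>ball 0 1. f z = 1 + c * w z"
    unfolding subordinate_def by blast
  have "norm (c * w z) < norm c" using w(1) assms(2,3) by (simp add: norm_mult)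
  thus ?thesis using that w(2) assms(2) by blast
qed

theorem lemma3:
  fixes n :: nat and lam lam1 :: complex and Q :: "complex \<Rightarrow> complex"
  assumes "n \<ge> 1"
    and "0 < norm lam1" and "norm lam1 < norm lam" and "norm lam < 1"
    and "Q \<in> H_class 1 n"
    and "subordinate Q (\<lambda>z. 1 + lam1 * z)"
  shows "(norm lam ^ 2 + norm lam1 ^ 2 \<le> 1 \<longrightarrow>
           (\<forall>p (\<alpha>::real). p \<in> H_class 1 n \<and> \<alpha> \<le> alpha0 (norm lam) (norm lam1) \<and>
              subordinate (\<lambda>z. Q z * (of_real \<alpha> + (1 - of_real \<alpha>) * p z)) (\<lambda>z. 1 + lam * z)
              \<longrightarrow> (\<forall>z\<in>ball 0 1. Re (p z) > 0)))
       \<and> (norm lam + 2 * norm lam1 \<le> 1 \<longrightarrow>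
           (\<forall>w. w \<in> H_class 0 n \<and> subordinate (\<lambda>z. Q z * (1 + w z)) (\<lambda>z. 1 + lam * z)
              \<longrightarrow> (\<forall>z\<in>ball 0 1. norm (w z) < (norm lam + norm lam1) / (1 - norm lam1)
                     \<and> (norm lam + norm lam1) / (1 - norm lam1) \<le> 1)))"
proof (intro conjI impI allI ballI; (elim conjE)?)
  define a where "a = norm lam"
  define b where "b = norm lam1"
  have a: "0 < a" "a < 1" and b: "0 < b" "b < 1" using assms unfolding a_def b_def by auto
  have lam0: "lam \<noteq> 0" "lam1 \<noteq> 0" using assms by auto
  {
    fix p and \<alpha> :: real and z
    assume al: "\<alpha> \<le> alpha0 (norm lam) (norm lam1)"
      and sp: "subordinate (\<lambda>z. Q z * (of_real \<alpha> + (1 - of_real \<alpha>) * p z)) (\<lambda>z. 1 + lam * z)"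
      and z: "z \<in> ball (0::complex) 1"
    obtain v where v: "Q z = 1 + v" "norm v < b" using sub_get2[OF assms(6) z lam0(2)] b_def by blast
    obtain u where u: "Q z * (of_real \<alpha> + (1 - of_real \<alpha>) * p z) = 1 + u" "norm u < a"
      using sub_get2[OF sp z lam0(1)] a_def by blast
    have nz: "1 + v \<noteq> 0" using v b norm_triangle_ineq2[of 1 "-v"] by auto
    have q: "of_real \<alpha> + (1 - of_real \<alpha>) * p z = (1+u)/(1+v)" using u(1) v(1) nz
      by (simp add: field_simps)
    have "Re ((1+u)/(1+v)) > alpha0 a b" by (rule core1[OF a b u(2) v(2)])
    moreover have "Re (of_real \<alpha> + (1 - of_real \<alpha>) * p z) = \<alpha> + (1 - \<alpha>) * Re (p z)"
      by (simp add: Re_complex_of_real)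
    ultimately have "\<alpha> + (1 - \<alpha>) * Re (p z) > \<alpha>" using q al a_def b_def by simp
    moreover have "\<alpha> < 1" using al alpha0_lt1[OF a b] unfolding a_def b_def by linarith
    ultimately have "(1 - \<alpha>) * Re (p z) > 0" "1 - \<alpha> > 0" by auto
    thus "Re (p z) > 0" by (simp add: zero_less_mult_iff)
  }
  {
    fix w z
    assume h: "norm lam + 2 * norm lam1 \<le> 1"
      and sp: "subordinate (\<lambda>z. Q z * (1 + w z)) (\<lambda>z. 1 + lam * z)"
      and z: "z \<in> ball (0::complex) 1"
    obtain v where v: "Q z = 1 + v" "norm v < b" using sub_get2[OF assms(6) z lam0(2)] b_def by blast
    obtain u where u: "Q z * (1 + w z) = 1 + u" "norm u < a"
      using sub_get2[OF sp z lam0(1)] a_def by blast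
    have nz: "1 + v \<noteq> 0" using v b norm_triangle_ineq2[of 1 "-v"] by auto
    have q: "w z = (1+u)/(1+v) - 1" using u(1) v(1) nz by (simp add: field_simps)
    show "norm (w z) < (norm lam + norm lam1) / (1 - norm lam1)"
      using core2[OF b u(2) v(2)] q a_def b_def by simp
    show "(norm lam + norm lam1) / (1 - norm lam1) \<le> 1"
      using h b b_def by (simp add: field_simps)
  }
qed

end
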